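(* Let $H\Gamma=(C,\{\mathcal W,\mathcal X,\mathcal Y,\mathcal Z\},G_{zx},G_{wy})$ be a Lagrangian hypercube diagram, let $i:T=S^1\times S^1\to\mathbb{R}^4$ be the immersed Lagrangian torus it determines, and let $L\subset(\mathbb{R}^5,\xi)$ be the embedded Legendrian torus obtained as the lift of $i$, with $H_1(L)=\langle\tilde\gamma_{zx},\tilde\gamma_{wy}\rangle$. Then, under the identification $[L,U(2)]\cong\pi_1(U(2))\times\pi_1(U(2))\cong\mathbb{Z}\times\mathbb{Z}$ given by restricting to $\tilde\gamma_{zx}$ and $\tilde\gamma_{wy}$, the rotation class of $L$ is $$r(L)=(w(G_{zx}),w(G_{wy})),$$ where for a grid diagram $G$, $w(G)=\frac14\big(\#(\text{counterclockwise oriented corners of }G)-\#(\text{clockwise oriented corners of }G)\big)$ is the winding number of the immersed curve determined by $G$.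
   Context: Grid conventions. In a plane with coordinates $(a,b)$ (below $(a,b)=(w,y)$ or $(a,b)=(z,x)$), an immersed grid diagram of size $n$ is an $n\times n$ grid of unit cells in $[0,n]^2$ with two kinds of markings at centers of cells, each row and each column containing exactly one marking of each kind; joining each marking of the first kind to the marking of the second kind in its row by an $a$-parallel segment, and each marking of the second kind to the marking of the first kind in its column by a $b$-parallel segment, gives an oriented connected closed piecewise-linear curve, with no crossing information recorded, viewed as an immersion $\gamma:\mathbb{R}/2\pi\mathbb{Z}\to\mathbb{R}^2$, $\theta\mapsto(a(\theta),b(\theta))$. It is a Lagrangian grid diagram if (1) $\int_0^{2\pi}b(\theta)a'(\theta)\,d\theta=0$ and (2) $\int_{\theta_0}^{\theta_1}b\,a'\,d\theta\neq0$ whenever $\theta_0\neq\theta_1$ and $\gamma(\theta_0)=\gamma(\theta_1)$. For a crossing $c=\gamma(\theta_0)=\gamma(\theta_1)$ put $|\Delta t(c)|=|\int_{\theta_0}^{\theta_1}b\,a'\,d\theta|$. The corners of $G$ are its markings (where the curve turns by a right angle); a corner is counterclockwise (resp. clockwise) if the curve turns left (resp. right) there, relative to the orientation of the $(a,b)$-plane. Hypercube diagrams. Let $C=[0,n]^4$ with coordinates $(w,x,y,z)$. A flat is a product in which two coordinates range over $[0,n]$ and the other two over unit intervals $[k,k+1]$, $k\in\mathbb{Z}$, named by its two full coordinates; a cube is a product in which three coordinates range over $[0,n]$ and one over a unit interval. Markings are points with all coordinates in $\mathbb{Z}+\frac12$ labelled $W,X,Y,Z$. Marking conditions: each cube contains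 exactly one marking of each label; each cube contains exactly two flats containing exactly three markings; in each flat with exactly three markings these form a right angle with rays parallel to coordinate axes; and the vertex of that right angle is $W$ iff the flat is a $zw$-flat, $X$ iff a $wx$-flat, $Y$ iff an $xy$-flat, $Z$ iff a $yz$-flat. The markings are joined into an oriented closed curve by joining each $W$ to an $X$ by a $w$-parallel segment, each $X$ to a $Y$ by an $x$-parallel segment, each $Y$ to a $Z$ by a $y$-parallel segment and each $Z$ to a $W$ by a $z$-parallel segment. Its projections to the $(w,y)$-plane and $(z,x)$-plane are immersed grid diagrams $G_{wy}$ (with $(a,b)=(w,y)$) and $G_{zx}$ (with $(a,b)=(z,x)$). $H\Gamma$ is a Lagrangian hypercube diagram if the marking conditions hold, $G_{wy}$ and $G_{zx}$ are Lagrangian grid diagrams, and $|\Delta t(c)|\neq|\Delta t(c')|$ for all crossings $c$ of $G_{zx}$ and $c'$ of $G_{wy}$. Torus and lift. Parametrize $G_{zx}$ by $s\mapsto(z(s),x(s))$ and $G_{wy}$ by $u\mapsto(w(u),y(u))$ (corners smoothed slightly so that conditions (1),(2) persist). The torus determined by $H\Gamma$ is $i(s,u)=(w(u),x(s),y(u),z(s))$ (copies of $G_{zx}$ placed in the $zx$-flats at the markings of $G_{wy}$, joined by tubes swept by translation in the $w$ and $y$ directions), with loops $\gamma_{zx}=S^1\times\{1\}$, $\gamma_{wy}=\{1\}\times S^1$. On $\mathbb{R}^5$ with coordinates $(w,x,y,z,t)$ take $\alpha=dt-y\,dw-x\,dz$, $\xi=\ker\alpha$. The lift $L$ is $\{(i(p),t(p))\}$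 with $t(p)=t_0+\int_\gamma(y\,dw+x\,dz)$ for a path $\gamma$ in $T$ from a fixed base point to $p$; $\tilde\gamma_{zx},\tilde\gamma_{wy}$ are the lifts of $\gamma_{zx},\gamma_{wy}$. Rotation class. Give $\xi$ the complex structure $J$ with $J(\partial_w+y\partial_t)=\partial_y$, $J(\partial_y)=-(\partial_w+y\partial_t)$, $J(\partial_z+x\partial_t)=\partial_x$, $J(\partial_x)=-(\partial_z+x\partial_t)$. For a Legendrian embedding $f:L\to\mathbb{R}^5$, the complexification $df_{\mathbb C}:TL\otimes\mathbb{C}\to\xi$, composed with the Lagrangian projection (which identifies $(\xi,J)$ with the trivial $\mathbb{C}^2$-bundle) and made unitary by a choice of Hermitian metrics, gives an element of $U(TL\otimes\mathbb{C},\mathbb{C}^2)$; its homotopy class, viewed in $[L,U(2)]$, is the rotation class $r(L)$. $\pi_1(U(2))\cong\mathbb{Z}$ via the determinant. *)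

theory Defs
  imports "HOL-Complex_Analysis.Complex_Analysis"
begin

text \<open>A marking is encoded by its four cell indices (w,x,y,z); the actual
coordinates are these indices plus 1/2.  A hypercube diagram of size n is
given by the cyclic list of its 4n markings in the order
W_0, X_0, Y_0, Z_0, W_1, ... in which the oriented curve visits them; the
label of the marking at position i is i mod 4 (0 = W, 1 = X, 2 = Y, 3 = Z).
Coordinate index j: 0 = w, 1 = x, 2 = y, 3 = z.\<close>

type_synonym mk = "nat \<times> nat \<times> nat \<times> nat"

definition crd :: "mk \<Rightarrow> nat \<Rightarrow> nat" where
  "crd p j = (case p of (a, b, c, d) \<Rightarrow>
     if j = 0 then a else if j = 1 then b else if j = 2 then c else d)"

definition fm :: "mk list \<Rightarrow> nat \<Rightarrow> nat \<Rightarrow> nat \<Rightarrow> nat \<Rightarrow> nat set" where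
  "fm ms j k j' k' = {i. i < length ms \<and> crd (ms!i) j = k \<and> crd (ms!i) j' = k'}"

definition differs_only :: "mk \<Rightarrow> mk \<Rightarrow> nat \<Rightarrow> bool" where
  "differs_only p q c \<longleftrightarrow> crd p c \<noteq> crd q c \<and> (\<forall>c'<4. c' \<noteq> c \<longrightarrow> crd p c' = crd q c')"

text \<open>Required label of the vertex of the right angle in a flat whose fixed
coordinates are j, j' (free coordinates = the complement):
zw-flat: W, wx-flat: X, xy-flat: Y, yz-flat: Z, otherwise impossible.\<close>
definition vlabel :: "nat \<Rightarrow> nat \<Rightarrow> nat option" where
  "vlabel j j' = (let F = {0,1,2,3::nat} - {j, j'} in
     if F = {3, 0} then Some 0 else if F = {0, 1} then Some 1
     else if F = {1, 2} then Some 2 else if F = {2, 3} then Some 3 else None)"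

definition hypercube_marking :: "nat \<Rightarrow> mk list \<Rightarrow> bool" where
  "hypercube_marking n ms \<longleftrightarrow> n \<ge> 1 \<and> length ms = 4 * n \<and>
     (\<forall>i < 4 * n. \<forall>j < 4. crd (ms!i) j < n) \<and>
     \<comment> \<open>the curve: W to X is w-parallel, X to Y x-parallel, Y to Z y-parallel, Z to W z-parallel\<close>
     (\<forall>i < 4 * n. \<forall>j < 4. j \<noteq> i mod 4 \<longrightarrow> crd (ms!i) j = crd (ms!((i + 1) mod (4 * n))) j) \<and>
     \<comment> \<open>each cube contains exactly one marking of each label\<close>
     (\<forall>j < 4. \<forall>k < n. \<forall>l < 4. card {i. i < 4 * n \<and> i mod 4 = l \<and> crd (ms!i) j = k} = 1) \<and>
     \<comment> \<open>each cube contains exactly two flats with exactly three markings\<close>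
     (\<forall>j < 4. \<forall>k < n. card {(j', k'). j' < 4 \<and> j' \<noteq> j \<and> k' < n \<and> card (fm ms j k j' k') = 3} = 2) \<and>
     \<comment> \<open>three markings in a flat form an axis-parallel right angle with the prescribed vertex label\<close>
     (\<forall>j < 4. \<forall>j' < 4. \<forall>k < n. \<forall>k' < n. j \<noteq> j' \<and> card (fm ms j k j' k') = 3 \<longrightarrow>
        (\<exists>v \<in> fm ms j k j' k'. \<exists>i1 \<in> fm ms j k j' k'. \<exists>i2 \<in> fm ms j k j' k'. \<exists>c1 c2.
           c1 \<noteq> c2 \<and> differs_only (ms!v) (ms!i1) c1 \<and> differs_only (ms!v) (ms!i2) c2 \<and>
           vlabel j j' = Some (v mod 4)))"

text \<open>An immersed grid diagram of size n is given by its markings (cell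
indices (a,b)) in the cyclic order of the curve: positions 2k are markings of
the first kind, positions 2k+1 of the second kind; 2k to 2k+1 is a-parallel
(same row), 2k+1 to 2k+2 is b-parallel (same column).\<close>

definition grid_diagram :: "nat \<Rightarrow> (nat \<times> nat) list \<Rightarrow> bool" where
  "grid_diagram n vs \<longleftrightarrow> n \<ge> 1 \<and> length vs = 2 * n \<and>
     (\<forall>i < 2 * n. fst (vs!i) < n \<and> snd (vs!i) < n) \<and>
     (\<forall>k < n. snd (vs!(2*k)) = snd (vs!(2*k+1)) \<and> fst (vs!(2*k)) \<noteq> fst (vs!(2*k+1))) \<and>
     (\<forall>k < n. fst (vs!(2*k+1)) = fst (vs!((2*k+2) mod (2*n))) \<and>
              snd (vs!(2*k+1)) \<noteq> snd (vs!((2*k+2) mod (2*n)))) \<and>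
     inj_on (\<lambda>k. fst (vs!(2*k))) {..<n} \<and> inj_on (\<lambda>k. snd (vs!(2*k))) {..<n} \<and>
     inj_on (\<lambda>k. fst (vs!(2*k+1))) {..<n} \<and> inj_on (\<lambda>k. snd (vs!(2*k+1))) {..<n}"

text \<open>Centre of a cell, as a point a + i b of the (a,b)-plane.\<close>
definition ctr :: "nat \<times> nat \<Rightarrow> complex" where
  "ctr c = Complex (real (fst c) + 1/2) (real (snd c) + 1/2)"

fun join_list :: "(real \<Rightarrow> complex) list \<Rightarrow> real \<Rightarrow> complex" where
  "join_list [] = linepath 0 0"
| "join_list [g] = g"
| "join_list (g # gs) = g +++ join_list gs"

definition pl_path :: "complex list \<Rightarrow> real \<Rightarrow> complex" where
  "pl_path ps = join_list (map (\<lambda>k. linepath (ps!k) (ps!((k + 1) mod length ps))) [0..<length ps])"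

definition grid_curve :: "(nat \<times> nat) list \<Rightarrow> real \<Rightarrow> complex" where
  "grid_curve vs = pl_path (map ctr vs)"

text \<open>For a path g = a + i b, the integral of b da along g.\<close>
definition area_int :: "(real \<Rightarrow> complex) \<Rightarrow> real" where
  "area_int g = Re (contour_integral g (\<lambda>z. of_real (Im z)))"

definition dt :: "(real \<Rightarrow> complex) \<Rightarrow> real \<Rightarrow> real \<Rightarrow> real" where
  "dt g a b = area_int (subpath a b g)"

definition is_crossing :: "(real \<Rightarrow> complex) \<Rightarrow> real \<Rightarrow> real \<Rightarrow> bool" where
  "is_crossing g a b \<longleftrightarrow> a \<in> {0..<1} \<and> b \<in> {0..<1} \<and> a \<noteq> b \<and> g a = g b"

definition lagrangian_curve :: "(real \<Rightarrow> complex) \<Rightarrow> bool" where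
  "lagrangian_curve g \<longleftrightarrow> area_int g = 0 \<and> (\<forall>a b. is_crossing g a b \<longrightarrow> dt g a b \<noteq> 0)"

definition lagrangian_grid :: "nat \<Rightarrow> (nat \<times> nat) list \<Rightarrow> bool" where
  "lagrangian_grid n vs \<longleftrightarrow> grid_diagram n vs \<and> lagrangian_curve (grid_curve vs)"

section \<open>The projections G_zx ((a,b) = (z,x)) and G_wy ((a,b) = (w,y))\<close>

text \<open>G_zx: markings Z_k (first kind), W_(k+1) (second kind); G_wy: W_k (first), X_k (second).\<close>
definition gzx :: "mk list \<Rightarrow> (nat \<times> nat) list" where
  "gzx ms = concat (map (\<lambda>k. [(crd (ms!(4*k+3)) 3, crd (ms!(4*k+3)) 1),
                             (crd (ms!((4*k+4) mod length ms)) 3, crd (ms!((4*k+4) mod length ms)) 1)])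
                        [0..<length ms div 4])"

definition gwy :: "mk list \<Rightarrow> (nat \<times> nat) list" where
  "gwy ms = concat (map (\<lambda>k. [(crd (ms!(4*k)) 0, crd (ms!(4*k)) 2),
                             (crd (ms!(4*k+1)) 0, crd (ms!(4*k+1)) 2)])
                        [0..<length ms div 4])"

definition lagrangian_hypercube :: "nat \<Rightarrow> mk list \<Rightarrow> bool" where
  "lagrangian_hypercube n ms \<longleftrightarrow> hypercube_marking n ms \<and>
     lagrangian_grid n (gzx ms) \<and> lagrangian_grid n (gwy ms) \<and>
     (\<forall>a b a' b'. is_crossing (grid_curve (gzx ms)) a b \<and> is_crossing (grid_curve (gwy ms)) a' b' \<longrightarrow>
        \<bar>dt (grid_curve (gzx ms)) a b\<bar> \<noteq> \<bar>dt (grid_curve (gwy ms)) a' b'\<bar>)"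

definition turn :: "complex list \<Rightarrow> nat \<Rightarrow> real" where
  "turn ps k = (let N = length ps;
                    din = ps!k - ps!((k + N - 1) mod N);
                    dout = ps!((k + 1) mod N) - ps!k in Im (cnj din * dout))"

definition ccw_corners :: "(nat \<times> nat) list \<Rightarrow> nat" where
  "ccw_corners vs = card {k. k < length vs \<and> turn (map ctr vs) k > 0}"

definition cw_corners :: "(nat \<times> nat) list \<Rightarrow> nat" where
  "cw_corners vs = card {k. k < length vs \<and> turn (map ctr vs) k < 0}"

definition wnum :: "(nat \<times> nat) list \<Rightarrow> real" where
  "wnum vs = (real (ccw_corners vs) - real (cw_corners vs)) / 4"

text \<open>c : R -> C (2 pi periodic, C^1, regular) is a slight corner smoothing of the
closed polygon with vertices ps: the circle splits into arcs [alpha k, beta k]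
near the k-th corner (staying within distance 1/2 of it, velocity in the
closed quarter-cone spanned by the incoming and outgoing directions) and
straight arcs [beta k, alpha (k+1)] running along the k-th edge in its direction.\<close>
definition smoothing :: "complex list \<Rightarrow> (real \<Rightarrow> complex) \<Rightarrow> bool" where
  "smoothing ps c \<longleftrightarrow> (let N = length ps; d = (\<lambda>k. ps!((k + 1) mod N) - ps!(k mod N)) in
     N \<ge> 1 \<and>
     (\<forall>\<theta>. c differentiable (at \<theta>)) \<and>
     continuous_on UNIV (\<lambda>\<theta>. vector_derivative c (at \<theta>)) \<and>
     (\<forall>\<theta>. vector_derivative c (at \<theta>) \<noteq> 0) \<and>
     (\<forall>\<theta>. c (\<theta> + 2 * pi) = c \<theta>) \<and>
     (\<exists>\<alpha> \<beta> :: nat \<Rightarrow> real.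
        (\<forall>k < N. \<alpha> k < \<beta> k) \<and> (\<forall>k. Suc k < N \<longrightarrow> \<beta> k < \<alpha> (Suc k)) \<and>
        \<beta> (N - 1) < \<alpha> 0 + 2 * pi \<and>
        (\<forall>k < N. \<forall>\<theta> \<in> {\<alpha> k..\<beta> k}. cmod (c \<theta> - ps!k) < 1/2 \<and>
            (\<exists>l m. l \<ge> 0 \<and> m \<ge> 0 \<and>
               vector_derivative c (at \<theta>) = of_real l * d (k + N - 1) + of_real m * d k)) \<and>
        (\<forall>k < N. \<forall>\<theta> \<in> {\<beta> k..(if Suc k < N then \<alpha> (Suc k) else \<alpha> 0 + 2 * pi)}.
            c \<theta> \<in> closed_segment (ps!k) (ps!((k + 1) mod N)) \<and>
            (\<exists>l > 0. vector_derivative c (at \<theta>) = of_real l * d k))))"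

definition sint :: "(real \<Rightarrow> real) \<Rightarrow> real \<Rightarrow> real \<Rightarrow> real" where
  "sint f a b = (if a \<le> b then integral {a..b} f else - integral {b..a} f)"

text \<open>czx s = z(s) + i x(s), cwy u = w(u) + i y(u).  The lift
(s,u) |-> (w(u), x(s), y(u), z(s), t(s,u)) with coordinates (w,x,y,z,t),
t = t0 + integral of y dw + x dz from the base point (0,0).\<close>
definition lift :: "real \<Rightarrow> (real \<Rightarrow> complex) \<Rightarrow> (real \<Rightarrow> complex) \<Rightarrow>
                    real \<times> real \<Rightarrow> real \<times> real \<times> real \<times> real \<times> real" where
  "lift t0 czx cwy = (\<lambda>(s, u). (Re (cwy u), Im (czx s), Im (cwy u), Re (czx s),
      t0 + sint (\<lambda>\<sigma>. Im (czx \<sigma>) * Re (vector_derivative czx (at \<sigma>))) 0 s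
         + sint (\<lambda>\<tau>. Im (cwy \<tau>) * Re (vector_derivative cwy (at \<tau>))) 0 u))"

text \<open>Lagrangian projection of a vector of xi, expressed in the complex
frame e1 = d_w + y d_t, i e1 = d_y, e2 = d_z + x d_t, i e2 = d_x.\<close>
definition lag_cx :: "real \<times> real \<times> real \<times> real \<times> real \<Rightarrow> complex \<times> complex" where
  "lag_cx v = (case v of (w, x, y, z, t) \<Rightarrow> (Complex w y, Complex z x))"

definition cinner :: "complex \<times> complex \<Rightarrow> complex \<times> complex \<Rightarrow> complex" where
  "cinner a b = cnj (fst a) * fst b + cnj (snd a) * snd b"

definition cscale :: "complex \<Rightarrow> complex \<times> complex \<Rightarrow> complex \<times> complex" where
  "cscale r v = (r * fst v, r * snd v)"

text \<open>Determinant of the unitarisation (Gram--Schmidt) of the complex 2x2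
matrix with columns c1, c2.\<close>
definition det_unitary :: "complex \<times> complex \<Rightarrow> complex \<times> complex \<Rightarrow> complex" where
  "det_unitary c1 c2 =
     (let q1 = cscale (1 / of_real (sqrt (Re (cinner c1 c1)))) c1;
          c2' = (fst c2 - cinner q1 c2 * fst q1, snd c2 - cinner q1 c2 * snd q1);
          q2 = cscale (1 / of_real (sqrt (Re (cinner c2' c2')))) c2'
      in fst q1 * snd q2 - snd q1 * fst q2)"

definition frame_s :: "(real \<times> real \<Rightarrow> real \<times> real \<times> real \<times> real \<times> real) \<Rightarrow> real \<Rightarrow> real \<Rightarrow> complex \<times> complex" where
  "frame_s f s u = lag_cx (vector_derivative (\<lambda>\<sigma>. f (\<sigma>, u)) (at s))"

definition frame_u :: "(real \<times> real \<Rightarrow> real \<times> real \<times> real \<times> real \<times> real) \<Rightarrow> real \<Rightarrow> real \<Rightarrow> complex \<times> complex" where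
  "frame_u f s u = lag_cx (vector_derivative (\<lambda>\<tau>. f (s, \<tau>)) (at u))"

text \<open>Rotation class, as the pair of classes in pi_1(U(2)) = Z (via det) of its
restrictions to the loops gamma_zx (s varies, u = 0) and gamma_wy (u varies, s = 0).\<close>
definition rot_class :: "(real \<times> real \<Rightarrow> real \<times> real \<times> real \<times> real \<times> real) \<Rightarrow> complex \<times> complex" where
  "rot_class f =
     (winding_number (\<lambda>\<theta>. det_unitary (frame_s f (2 * pi * \<theta>) 0) (frame_u f (2 * pi * \<theta>) 0)) 0,
      winding_number (\<lambda>\<theta>. det_unitary (frame_s f 0 (2 * pi * \<theta>)) (frame_u f 0 (2 * pi * \<theta>))) 0)"

end

theory Submission
  imports Defs
begin


definition W :: "(real \<Rightarrow> complex) \<Rightarrow> real \<Rightarrow> real \<Rightarrow> complex" where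
  "W V a b = winding_number (\<lambda>t. V (a + (b - a) * t)) 0"

lemma W_Ln:
  assumes cont: "continuous_on UNIV V" and w: "w \<noteq> 0"
    and nr: "\<And>\<theta>. \<theta> \<in> closed_segment a b \<Longrightarrow> V \<theta> / w \<notin> \<real>\<^sub>\<le>\<^sub>0"
  shows "W V a b = (Ln (V b / w) - Ln (V a / w)) / (2 * of_real pi * \<i>)"
proof -
  define h where "h t = Ln (V (a + (b - a) * t) / w) + Ln w" for t
  have seg: "a + (b - a) * t \<in> closed_segment a b" if "t \<in> {0..1}" for t
    using that by (auto simp: closed_segment_real_eq algebra_simps)
  have "W V a b = winding_number (exp \<circ> h) 0"
    unfolding W_def
  proof (rule winding_number_cong)
    fix t :: real assume "0 \<le> t" "t \<le> 1"
    then have "V (a + (b - a) * t) / w \<noteq> 0" using nr[OF seg[of t]] by auto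
    then show "V (a + (b - a) * t) = (exp \<circ> h) t"
      using w by (simp add: h_def exp_add)
  qed
  also have "\<dots> = (pathfinish h - pathstart h) / (2 * of_real pi * \<i>)"
  proof (rule winding_number_compose_exp)
    have c1: "continuous_on {0..1} (\<lambda>t. V (a + (b - a) * t) / w)"
      using w by (intro continuous_intros continuous_on_compose2[OF cont]) auto
    have "continuous_on {0..1} (\<lambda>t. Ln (V (a + (b - a) * t) / w))"
      by (rule continuous_on_compose2[OF continuous_on_Ln c1, of "(\<lambda>t. V (a + (b - a) * t) / w) ` {0..1}"])
         (use nr seg in auto)
    then show "path h" unfolding path_def h_def by (intro continuous_on_add continuous_on_const)
  qed
  finally show ?thesis by (simp add: h_def pathfinish_def pathstart_def diff_divide_distrib)
qed

lemma W_add: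
  assumes cont: "continuous_on UNIV V" and nz: "\<And>x. V x \<noteq> 0"
  shows "W V a b + W V b c = W V a c"
proof (cases "min a (min b c) = max a (max b c)")
  case True
  then have "a = b" "b = c" by linarith+
  then show ?thesis using nz by (simp add: W_def flip: linepath_refl)
next
  case False
  define m where "m = min a (min b c)"
  define M where "M = max a (max b c)"
  have mM: "m < M" using False unfolding m_def M_def by linarith
  define Q where "Q t = V (m + (M - m) * t)" for t
  have pQ: "path Q" unfolding path_def Q_def
    by (intro continuous_on_compose2[OF cont] continuous_intros) auto
  have nQ: "0 \<notin> path_image Q" using nz by (auto simp: path_image_def Q_def)
  define r where "r x = (x - m) / (M - m)" for x
  have r01: "r x \<in> {0..1}" if "x \<in> {a,b,c}" for x
    using that mM unfolding r_def m_def M_def by (auto simp: field_simps)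
  have sp: "subpath (r x) (r y) Q = (\<lambda>t. V (x + (y - x) * t))" for x y
  proof
    fix t
    have rr: "(M - m) * r z = z - m" for z using mM unfolding r_def by simp
    have "(M - m) * ((r y - r x) * t + r x) = ((M - m) * r y - (M - m) * r x) * t + (M - m) * r x"
      by (simp add: algebra_simps)
    also have "\<dots> = (y - x) * t + (x - m)" by (simp add: rr)
    finally have "(M - m) * ((r y - r x) * t + r x) = (y - x) * t + (x - m)" .
    then have "m + (M - m) * ((r y - r x) * t + r x) = x + (y - x) * t" by simp
    then show "subpath (r x) (r y) Q t = V (x + (y - x) * t)"
      unfolding subpath_def Q_def by simp
  qed
  show ?thesis
    using winding_number_subpath_combine[OF pQ nQ r01[of a] r01[of b] r01[of c]]
    by (simp add: sp W_def)
qed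

lemma W_refl:
  assumes "continuous_on UNIV V" "\<And>x. V x \<noteq> 0"
  shows "W V a a = 0"
  using W_add[OF assms, of a a a] by simp

lemma W_sum:
  assumes "continuous_on UNIV V" "\<And>x. V x \<noteq> 0"
  shows "W V (A 0) (A m) = (\<Sum>k<m. W V (A k) (A (Suc k)))"
proof (induction m)
  case 0 then show ?case using W_refl[OF assms] by simp
next
  case (Suc m)
  then show ?case using W_add[OF assms, of "A 0" "A m" "A (Suc m)"] by simp
qed

lemma W_period:
  assumes c: "continuous_on UNIV V" and nz: "\<And>x. V x \<noteq> 0" and per: "\<And>x. V (x + 2 * pi) = V x"
  shows "W V a (a + 2 * pi) = W V 0 (2 * pi)"
proof -
  have sh: "W V (2 * pi) (a + 2 * pi) = W V 0 a"
    unfolding W_def using per by (simp add: add.commute)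
  have "W V 0 a + W V a (a + 2 * pi) = W V 0 (2 * pi) + W V (2 * pi) (a + 2 * pi)"
    using W_add[OF c nz, of 0 a "a + 2 * pi"] W_add[OF c nz, of 0 "2 * pi" "a + 2 * pi"] by simp
  then show ?thesis using sh by simp
qed



lemma q_facts:
  fixes a b :: complex
  assumes a: "a \<noteq> 0" and b: "b \<noteq> 0" and perp: "Re (cnj a * b) = 0"
  shows "b / a = \<i> * of_real (Im (cnj a * b) / (cmod a)^2)"
    and "cmod b = \<bar>Im (cnj a * b)\<bar> / cmod a"
    and "Im (cnj a * b) \<noteq> 0"
proof -
  define q where "q = cnj a * b"
  have qi: "q = \<i> * of_real (Im q)" using perp unfolding q_def by (simp add: complex_eq_iff)
  have aa: "a * cnj a = of_real ((cmod a)^2)" by (rule complex_norm_square[symmetric])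
  have "b / a = (cnj a * b) / (a * cnj a)" using a by (simp add: field_simps)
  also have "\<dots> = \<i> * of_real (Im q / (cmod a)^2)"
    using a by (subst aa) (metis qi q_def of_real_divide mult.assoc times_divide_eq_right)
  finally show "b / a = \<i> * of_real (Im (cnj a * b) / (cmod a)^2)" by (simp add: q_def)
  have "cmod q = cmod a * cmod b" unfolding q_def by (simp add: norm_mult)
  moreover have "cmod q = \<bar>Im q\<bar>" by (subst qi) (simp add: norm_mult)
  ultimately show "cmod b = \<bar>Im (cnj a * b)\<bar> / cmod a" using a by (simp add: q_def field_simps)
  show "Im (cnj a * b) \<noteq> 0" using \<open>cmod q = cmod a * cmod b\<close> \<open>cmod q = \<bar>Im q\<bar>\<close> a b
    by (auto simp: q_def)
qed

lemma dir_ratio: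
  fixes a b :: complex
  assumes a: "a \<noteq> 0" and b: "b \<noteq> 0" and perp: "Re (cnj a * b) = 0"
  shows "(b / of_real (cmod b)) / (a / of_real (cmod a)) = (if Im (cnj a * b) > 0 then \<i> else -\<i>)"
proof -
  note q = q_facts[OF a b perp]
  define t where "t = Im (cnj a * b)"
  have na: "cmod a > 0" using a by simp
  have "(b / of_real (cmod b)) / (a / of_real (cmod a)) = (b / a) * of_real (cmod a / cmod b)"
    by (simp add: field_simps)
  also have "\<dots> = \<i> * of_real (t / (cmod a)^2 * (cmod a / (\<bar>t\<bar> / cmod a)))"
    using q unfolding t_def by simp
  also have "t / (cmod a)^2 * (cmod a / (\<bar>t\<bar> / cmod a)) = t / \<bar>t\<bar>"
    using na by (simp add: field_simps power2_eq_square)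
  finally show ?thesis using q(3) unfolding t_def[symmetric] by (auto simp: abs_if)
qed

lemma cone_notnonpos:
  fixes a b :: complex and l m :: real and K :: complex
  assumes a: "a \<noteq> 0" and b: "b \<noteq> 0" and perp: "Re (cnj a * b) = 0"
    and l: "l \<ge> 0" and m: "m \<ge> 0" and v: "v = of_real l * a + of_real m * b" and vnz: "v \<noteq> 0"
    and K: "K \<noteq> 0"
  shows "(K * (v / of_real (cmod v))) / (K * (a / of_real (cmod a))) \<notin> \<real>\<^sub>\<le>\<^sub>0"
proof
  assume H: "(K * (v / of_real (cmod v))) / (K * (a / of_real (cmod a))) \<in> \<real>\<^sub>\<le>\<^sub>0"
  note q = q_facts[OF a b perp]
  define t where "t = Im (cnj a * b)"
  have "(K * (v / of_real (cmod v))) / (K * (a / of_real (cmod a))) = (v / a) * of_real (cmod a / cmod v)"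
    using K by (simp add: field_simps)
  also have "v / a = of_real l + of_real m * (b / a)" using a v by (simp add: field_simps)
  also have "\<dots> = Complex l (m * (t / (cmod a)^2))" unfolding q(1) t_def
    by (simp add: complex_eq_iff)
  finally have E: "(K * (v / of_real (cmod v))) / (K * (a / of_real (cmod a))) =
     Complex l (m * (t / (cmod a)^2)) * of_real (cmod a / cmod v)" .
  have pos: "cmod a / cmod v > 0" using a vnz by simp
  from H[unfolded E complex_nonpos_Reals_iff] pos
  have "l * (cmod a / cmod v) \<le> 0" "m * (t / (cmod a)^2) = 0"
    by (auto simp: mult_le_0_iff)
  then have "l \<le> 0" "m * (t / (cmod a)^2) = 0"
    using pos mult_pos_pos[of l "cmod a / cmod v"] by linarith+
  then have "l = 0" "m = 0" using l q(3) a unfolding t_def by auto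
  then show False using v vnz by simp
qed



lemma Re_ctr[simp]: "Re (ctr p) = real (fst p) + 1/2" and Im_ctr[simp]: "Im (ctr p) = real (snd p) + 1/2"
  by (simp_all add: ctr_def)

lemma grid_dirs:
  assumes g: "grid_diagram n vs"
  defines "ps \<equiv> map ctr vs" and "N \<equiv> length (map ctr vs)"
  shows "even (j mod N) \<Longrightarrow> Im (ps!((j+1) mod N) - ps!(j mod N)) = 0 \<and> Re (ps!((j+1) mod N) - ps!(j mod N)) \<noteq> 0"
    and "odd (j mod N) \<Longrightarrow> Re (ps!((j+1) mod N) - ps!(j mod N)) = 0 \<and> Im (ps!((j+1) mod N) - ps!(j mod N)) \<noteq> 0"
proof -
  have n: "n \<ge> 1" and len: "length vs = 2 * n" using g by (auto simp: grid_diagram_def)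
  have N: "N = 2 * n" using len by (simp add: N_def)
  have lt: "j mod N < 2 * n" using N n by simp
  have jj: "(j + 1) mod N = (j mod N + 1) mod N" by (simp add: mod_Suc_eq)
  {
    assume e: "even (j mod N)"
    then obtain k where k: "j mod N = 2 * k" by (auto elim: evenE)
    have kn: "k < n" using lt k by simp
    have "(j + 1) mod N = 2 * k + 1" using jj k kn N by simp
    moreover have "snd (vs!(2*k)) = snd (vs!(2*k+1)) \<and> fst (vs!(2*k)) \<noteq> fst (vs!(2*k+1))"
      using g kn by (auto simp: grid_diagram_def)
    ultimately show "Im (ps!((j+1) mod N) - ps!(j mod N)) = 0 \<and> Re (ps!((j+1) mod N) - ps!(j mod N)) \<noteq> 0"
      using k kn len unfolding ps_def by auto
  }
  {
    assume o: "odd (j mod N)"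
    then obtain k where k: "j mod N = 2 * k + 1" by (auto elim: oddE)
    have kn: "k < n" using lt k by simp
    have "(j + 1) mod N = (2 * k + 2) mod (2 * n)" using jj k N by simp
    moreover have "fst (vs!(2*k+1)) = fst (vs!((2*k+2) mod (2*n))) \<and> snd (vs!(2*k+1)) \<noteq> snd (vs!((2*k+2) mod (2*n)))"
      using g kn by (auto simp: grid_diagram_def)
    moreover have "(2 * k + 2) mod (2 * n) < length vs" using len n by simp
    ultimately show "Re (ps!((j+1) mod N) - ps!(j mod N)) = 0 \<and> Im (ps!((j+1) mod N) - ps!(j mod N)) \<noteq> 0"
      using k kn len unfolding ps_def by auto
  }
qed



lemma even_mod_evenN: "even (N::nat) \<Longrightarrow> even (x mod N) \<longleftrightarrow> even x"
  by (metis dvd_mod_iff even_mod_2_iff mod_mod_cancel)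

lemma main_wind:
  assumes g: "grid_diagram n vs" and sm: "smoothing (map ctr vs) c" and K: "K \<noteq> 0"
  shows "W (\<lambda>\<theta>. K * (vector_derivative c (at \<theta>) / of_real (cmod (vector_derivative c (at \<theta>))))) 0 (2*pi)
         = of_real (wnum vs)"
proof -
  define ps where "ps = map ctr vs"
  define N where "N = length ps"
  define d where "d j = ps!((j + 1) mod N) - ps!(j mod N)" for j
  define D where "D \<theta> = vector_derivative c (at \<theta>)" for \<theta>
  define V where "V \<theta> = K * (D \<theta> / of_real (cmod (D \<theta>)))" for \<theta>
  define e where "e j = d j / of_real (cmod (d j))" for j
  have N2: "N = 2 * n" "n \<ge> 1" using g by (auto simp: grid_diagram_def N_def ps_def)
  have evN: "even N" using N2 by simp
  from sm have sm': "N \<ge> 1 \<and>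
     (\<forall>\<theta>. c differentiable (at \<theta>)) \<and>
     continuous_on UNIV D \<and>
     (\<forall>\<theta>. D \<theta> \<noteq> 0) \<and>
     (\<forall>\<theta>. c (\<theta> + 2 * pi) = c \<theta>) \<and>
     (\<exists>\<alpha> \<beta> :: nat \<Rightarrow> real.
        (\<forall>k < N. \<alpha> k < \<beta> k) \<and> (\<forall>k. Suc k < N \<longrightarrow> \<beta> k < \<alpha> (Suc k)) \<and>
        \<beta> (N - 1) < \<alpha> 0 + 2 * pi \<and>
        (\<forall>k < N. \<forall>\<theta> \<in> {\<alpha> k..\<beta> k}. cmod (c \<theta> - ps!k) < 1/2 \<and>
            (\<exists>l m. l \<ge> 0 \<and> m \<ge> 0 \<and>
               D \<theta> = of_real l * d (k + N - 1) + of_real m * d k)) \<and>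
        (\<forall>k < N. \<forall>\<theta> \<in> {\<beta> k..(if Suc k < N then \<alpha> (Suc k) else \<alpha> 0 + 2 * pi)}.
            c \<theta> \<in> closed_segment (ps!k) (ps!((k + 1) mod N)) \<and>
            (\<exists>l > 0. D \<theta> = of_real l * d k)))"
    unfolding smoothing_def Let_def ps_def[symmetric] N_def[symmetric] d_def D_def
    by (simp only: mod_mod_trivial) simp
  have diff: "\<And>\<theta>. c differentiable (at \<theta>)" using sm'[THEN conjunct2, THEN conjunct1] by blast
  have contD: "continuous_on UNIV D" using sm'[THEN conjunct2, THEN conjunct2, THEN conjunct1] .
  have nzD: "\<And>\<theta>. D \<theta> \<noteq> 0" using sm'[THEN conjunct2, THEN conjunct2, THEN conjunct2, THEN conjunct1] by blast
  have perc: "\<And>\<theta>. c (\<theta> + 2 * pi) = c \<theta>"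
    using sm'[THEN conjunct2, THEN conjunct2, THEN conjunct2, THEN conjunct2, THEN conjunct1] by blast
  note EX = sm'[THEN conjunct2, THEN conjunct2, THEN conjunct2, THEN conjunct2, THEN conjunct2]
  from EX obtain \<alpha> \<beta> where H: "(\<forall>k < N. \<alpha> k < \<beta> k) \<and> (\<forall>k. Suc k < N \<longrightarrow> \<beta> k < \<alpha> (Suc k)) \<and>
        \<beta> (N - 1) < \<alpha> 0 + 2 * pi \<and>
        (\<forall>k < N. \<forall>\<theta> \<in> {\<alpha> k..\<beta> k}. cmod (c \<theta> - ps!k) < 1/2 \<and>
            (\<exists>l m. l \<ge> 0 \<and> m \<ge> 0 \<and>
               D \<theta> = of_real l * d (k + N - 1) + of_real m * d k)) \<and>
        (\<forall>k < N. \<forall>\<theta> \<in> {\<beta> k..(if Suc k < N then \<alpha> (Suc k) else \<alpha> 0 + 2 * pi)}.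
            c \<theta> \<in> closed_segment (ps!k) (ps!((k + 1) mod N)) \<and>
            (\<exists>l > 0. D \<theta> = of_real l * d k))"
    by (elim exE) (erule that)
  have ab: "\<And>k. k < N \<Longrightarrow> \<alpha> k < \<beta> k" using H[THEN conjunct1] by blast
  have ba: "\<And>k. Suc k < N \<Longrightarrow> \<beta> k < \<alpha> (Suc k)" using H[THEN conjunct2, THEN conjunct1] by blast
  have blast: "\<beta> (N - 1) < \<alpha> 0 + 2 * pi" using H[THEN conjunct2, THEN conjunct2, THEN conjunct1] .
  have corner: "\<And>k \<theta>. k < N \<Longrightarrow> \<theta> \<in> {\<alpha> k..\<beta> k} \<Longrightarrow>
            (\<exists>l m. l \<ge> 0 \<and> m \<ge> 0 \<and> D \<theta> = of_real l * d (k + N - 1) + of_real m * d k)"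
    using H[THEN conjunct2, THEN conjunct2, THEN conjunct2, THEN conjunct1] by blast
  have straight0: "\<And>k \<theta>. k < N \<Longrightarrow> \<theta> \<in> {\<beta> k..(if Suc k < N then \<alpha> (Suc k) else \<alpha> 0 + 2 * pi)} \<Longrightarrow>
            (\<exists>l > 0. D \<theta> = of_real l * d k)"
    using H[THEN conjunct2, THEN conjunct2, THEN conjunct2, THEN conjunct2] by blast
  define A where "A k = (if k < N then \<alpha> k else \<alpha> 0 + 2 * pi)" for k
  have straight: "\<exists>l > 0. D \<theta> = of_real l * d k" if "k < N" "\<theta> \<in> {\<beta> k..A (Suc k)}" for k \<theta>
    using straight0[OF that(1)] that(2) unfolding A_def by auto
  have bA: "\<beta> k < A (Suc k)" if "k < N" for k
  proof (cases "Suc k < N")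
    case True then show ?thesis using ba by (simp add: A_def)
  next
    case False
    then have "k = N - 1" using that by simp
    then show ?thesis using blast False by (simp add: A_def)
  qed
  have Ak: "A k = \<alpha> k" if "k < N" for k using that by (simp add: A_def)
  have contV: "continuous_on UNIV V" unfolding V_def
    using nzD by (intro continuous_intros contD) auto
  have nzV: "V x \<noteq> 0" for x using nzD K by (simp add: V_def)
  have perD: "D (x + 2 * pi) = D x" for x
  proof -
    have hv: "(c has_vector_derivative D x) (at x)"
      unfolding D_def using diff vector_derivative_works by blast
    have ceq: "c = c \<circ> (\<lambda>y. y - 2 * pi)"
    proof (rule ext)
      fix y show "c y = (c \<circ> (\<lambda>y. y - 2 * pi)) y" using perc[of "y - 2 * pi"] by simp
    qed
    have "((\<lambda>y. y - 2 * pi) has_vector_derivative 1) (at (x + 2 * pi))"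
      by (auto intro!: derivative_eq_intros)
    then have "((c \<circ> (\<lambda>y. y - 2 * pi)) has_vector_derivative (1 *\<^sub>R D x)) (at (x + 2 * pi))"
      by (rule vector_diff_chain_at) (simp add: hv)
    then have "(c has_vector_derivative D x) (at (x + 2 * pi))" using ceq by simp
    then show ?thesis unfolding D_def by (rule vector_derivative_at)
  qed
  have perV: "V (x + 2 * pi) = V x" for x by (simp add: V_def perD)
  have dmod: "d j = d (j mod N)" for j unfolding d_def by (simp add: mod_Suc_eq)
  have daxis: "(even j \<longrightarrow> Im (d j) = 0 \<and> Re (d j) \<noteq> 0) \<and> (odd j \<longrightarrow> Re (d j) = 0 \<and> Im (d j) \<noteq> 0)" for j
    using grid_dirs[OF g, of j] even_mod_evenN[OF evN, of j]
    unfolding d_def ps_def[symmetric] N_def[symmetric] by auto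
  have dnz: "d j \<noteq> 0" for j using daxis[of j] by auto
  have perp: "Re (cnj (d j) * d (Suc j)) = 0" for j
    using daxis[of j] daxis[of "Suc j"] by auto
  have din: "d (k + N - 1) = ps!k - ps!((k + N - 1) mod N)" if "k < N" for k
  proof -
    have "(k + N - 1 + 1) mod N = k" using that N2 by simp
    then show ?thesis unfolding d_def by simp
  qed
  have dout: "d k = ps!((k + 1) mod N) - ps!k" if "k < N" for k
    using that unfolding d_def by simp
  have turn_eq: "turn ps k = Im (cnj (d (k + N - 1)) * d k)" if "k < N" for k
    unfolding turn_def Let_def N_def[symmetric] using din[OF that] dout[OF that] by simp
  have dsuc: "d (Suc (k + N - 1)) = d k" if "k < N" for k
  proof -
    have "Suc (k + N - 1) = k + N" using N2 by simp
    then show ?thesis by (metis dmod mod_add_self2)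
  qed
  have perp': "Re (cnj (d (k + N - 1)) * d k) = 0" if "k < N" for k
    using perp[of "k + N - 1"] dsuc[OF that] by simp
  have Vstraight: "V \<theta> = K * e k" if st: "k < N" "\<theta> \<in> {\<beta> k..A (Suc k)}" for k \<theta>
  proof -
    obtain l where l: "l > 0" "D \<theta> = of_real l * d k" using straight[OF st] by blast
    have "cmod (D \<theta>) = l * cmod (d k)" using l by (simp add: norm_mult)
    then show ?thesis using l dnz[of k] unfolding V_def e_def by (simp add: field_simps)
  qed
  have piece: "W V (A k) (A (Suc k)) = (if turn ps k > 0 then 1/4 else -1/4)" if kN: "k < N" for k
  proof -
    have s0: "W V (\<beta> k) (A (Suc k)) = 0"
    proof -
      have w: "K * e k \<noteq> 0" using K dnz[of k] by (simp add: e_def)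
      have "W V (\<beta> k) (A (Suc k)) = (Ln (V (A (Suc k)) / (K * e k)) - Ln (V (\<beta> k) / (K * e k))) / (2 * of_real pi * \<i>)"
      proof (rule W_Ln[OF contV w])
        fix \<theta> assume "\<theta> \<in> closed_segment (\<beta> k) (A (Suc k))"
        then have "\<theta> \<in> {\<beta> k..A (Suc k)}" using bA[OF kN] by (simp add: closed_segment_eq_real_ivl)
        then show "V \<theta> / (K * e k) \<notin> \<real>\<^sub>\<le>\<^sub>0" using Vstraight[OF kN] w by simp
      qed
      also have "\<dots> = 0"
        using Vstraight[OF kN, of "A (Suc k)"] Vstraight[OF kN, of "\<beta> k"] bA[OF kN] w by simp
      finally show ?thesis .
    qed
    define a where "a = d (k + N - 1)"
    define b where "b = d k"
    have anz: "a \<noteq> 0" and bnz: "b \<noteq> 0" and pab: "Re (cnj a * b) = 0"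
      using dnz perp'[OF kN] by (auto simp: a_def b_def)
    have w: "K * e (k + N - 1) \<noteq> 0" using K dnz by (simp add: e_def)
    have Va: "V (\<alpha> k) = K * e (k + N - 1)"
    proof (cases k)
      case 0
      have m: "N - 1 < N" using N2 by simp
      have AN: "A (Suc (N - 1)) = \<alpha> 0 + 2 * pi" using N2 by (simp add: A_def)
      have mem: "\<alpha> 0 + 2 * pi \<in> {\<beta> (N - 1)..A (Suc (N - 1))}"
        using bA[OF m] unfolding AN by simp
      have "V (\<alpha> 0) = V (\<alpha> 0 + 2 * pi)" by (simp only: perV)
      also have "\<dots> = K * e (N - 1)" by (rule Vstraight[OF m mem])
      finally show ?thesis using 0 by simp
    next
      case (Suc k')
      have m: "k' < N" using Suc kN by simp
      have AN: "A (Suc k') = \<alpha> k" using Ak[OF kN] Suc by simp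
      have mem: "\<alpha> k \<in> {\<beta> k'..A (Suc k')}" using bA[OF m] unfolding AN by simp
      have "V (\<alpha> k) = K * e k'" by (rule Vstraight[OF m mem])
      moreover have "d (k + N - 1) = d k'"
      proof -
        have "k + N - 1 = k' + N" using Suc by simp
        then have "d (k + N - 1) = d ((k' + N) mod N)" using dmod by metis
        also have "\<dots> = d k'" using m by simp
        finally show ?thesis .
      qed
      ultimately show ?thesis by (simp only: e_def)
    qed
    have Vb: "V (\<beta> k) = K * e k" using Vstraight[OF kN, of "\<beta> k"] bA[OF kN] by simp
    have "W V (\<alpha> k) (\<beta> k) = (Ln (V (\<beta> k) / (K * e (k + N - 1))) - Ln (V (\<alpha> k) / (K * e (k + N - 1)))) / (2 * of_real pi * \<i>)"
    proof (rule W_Ln[OF contV w])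
      fix \<theta> assume "\<theta> \<in> closed_segment (\<alpha> k) (\<beta> k)"
      then have th: "\<theta> \<in> {\<alpha> k..\<beta> k}" using ab[OF kN] by (simp add: closed_segment_eq_real_ivl)
      obtain l m where lm: "l \<ge> 0" "m \<ge> 0" "D \<theta> = of_real l * a + of_real m * b"
        using corner[OF kN th] unfolding a_def b_def by blast
      show "V \<theta> / (K * e (k + N - 1)) \<notin> \<real>\<^sub>\<le>\<^sub>0"
        using cone_notnonpos[OF anz bnz pab lm nzD K] unfolding V_def e_def a_def by simp
    qed
    also have "\<dots> = Ln (e k / e (k + N - 1)) / (2 * of_real pi * \<i>)"
      using Va Vb w K by simp
    also have "e k / e (k + N - 1) = (if turn ps k > 0 then \<i> else -\<i>)"
      using dir_ratio[OF anz bnz pab] turn_eq[OF kN] unfolding e_def a_def b_def by simp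
    finally have c0': "W V (\<alpha> k) (\<beta> k) = Ln (if turn ps k > 0 then \<i> else -\<i>) / (2 * of_real pi * \<i>)" .
    have l1: "(\<i> * of_real pi / 2) / (2 * of_real pi * \<i>) = (1/4 :: complex)"
      by (simp add: field_simps)
    have l2: "(- (\<i> * of_real pi / 2)) / (2 * of_real pi * \<i>) = (-1/4 :: complex)"
      by (simp add: field_simps)
    have c0: "W V (\<alpha> k) (\<beta> k) = (if turn ps k > 0 then 1/4 else -1/4)"
      unfolding c0' using l1 l2 by (simp only: if_distrib[of Ln] if_distrib[of "\<lambda>x. x / _"] Ln_ii Ln_minus_ii)
    show ?thesis using W_add[OF contV nzV, of "\<alpha> k" "\<beta> k" "A (Suc k)"] s0 c0 Ak[OF kN] by simp
  qed
  have turn_nz: "turn ps k \<noteq> 0" if "k < N" for k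
    using q_facts(3)[OF dnz dnz perp'[OF that]] turn_eq[OF that] by simp
  have "W V 0 (2 * pi) = W V (A 0) (A N)"
    using W_period[OF contV nzV perV, of "\<alpha> 0"] N2 by (simp add: A_def)
  also have "\<dots> = (\<Sum>k<N. W V (A k) (A (Suc k)))" by (rule W_sum[OF contV nzV])
  also have "\<dots> = (\<Sum>k<N. (if turn ps k > 0 then 1/4 else -1/4))"
    by (rule sum.cong) (auto simp: piece)
  also have "\<dots> = of_real (\<Sum>k<N. (if turn ps k > 0 then 1/4 else -1/4))"
    unfolding of_real_sum by (rule sum.cong) auto
  also have "(\<Sum>k<N. (if turn ps k > 0 then 1/4 else -1/4 :: real)) = wnum vs"
  proof -
    have fin: "finite {..<N}" by simp
    have s1: "{..<N} \<inter> {k. turn ps k > 0} = {k. k < length vs \<and> turn (map ctr vs) k > 0}"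
      by (auto simp: N_def ps_def)
    have s2: "{..<N} \<inter> - {k. turn ps k > 0} = {k. k < length vs \<and> turn (map ctr vs) k < 0}"
      using turn_nz by (auto simp: N_def ps_def less_le)
    show ?thesis
      unfolding sum.If_cases[OF fin] s1 s2 wnum_def ccw_corners_def cw_corners_def
      by (simp add: field_simps)
  qed
  finally show ?thesis unfolding V_def D_def .
qed



lemma sint_eq:
  fixes f :: "real \<Rightarrow> real"
  assumes cf: "continuous_on UNIV f" and ax: "a \<le> x" and a0: "a \<le> 0"
  shows "sint f 0 x = integral {a..x} f - integral {a..0} f"
proof (cases "0 \<le> x")
  case True
  have "integral {a..0} f + integral {0..x} f = integral {a..x} f"
    by (rule Henstock_Kurzweil_Integration.integral_combine[OF a0 True])
       (intro integrable_continuous_real continuous_on_subset[OF cf], simp)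
  then show ?thesis using True by (simp add: sint_def)
next
  case False
  have "integral {a..x} f + integral {x..0} f = integral {a..0} f"
    by (rule Henstock_Kurzweil_Integration.integral_combine[OF ax]) (use False in \<open>auto intro!: integrable_continuous_real continuous_on_subset[OF cf]\<close>)
  then show ?thesis using False by (simp add: sint_def)
qed

lemma sint_deriv:
  fixes f :: "real \<Rightarrow> real"
  assumes cf: "continuous_on UNIV f"
  shows "((\<lambda>x. sint f 0 x) has_vector_derivative f s) (at s)"
proof -
  define a where "a = - \<bar>s\<bar> - 1"
  define b where "b = \<bar>s\<bar> + 1"
  have "((\<lambda>u. integral {a..u} f) has_vector_derivative f s) (at s within {a..b})"
    by (rule integral_has_vector_derivative) (auto intro: continuous_on_subset[OF cf] simp: a_def b_def)
  then have "((\<lambda>u. integral {a..u} f) has_vector_derivative f s) (at s within {a<..<b})"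
    by (rule has_vector_derivative_within_subset) auto
  then have "((\<lambda>u. integral {a..u} f) has_vector_derivative f s) (at s)"
    by (subst (asm) has_vector_derivative_within_open) (auto simp: a_def b_def)
  then have "((\<lambda>u. integral {a..u} f - integral {a..0} f) has_vector_derivative f s) (at s)"
    by (auto intro!: derivative_eq_intros)
  then show ?thesis
    by (rule has_vector_derivative_transform_within_open[where S="{a<..<b}"])
       (auto simp: a_def b_def intro!: sint_eq[OF cf, symmetric])
qed

lemma Re_vd: "(f has_vector_derivative D) F \<Longrightarrow> ((\<lambda>x. Re (f x)) has_vector_derivative Re D) F"
  using has_field_derivative_Re has_real_derivative_iff_has_vector_derivative by blast
lemma Im_vd: "(f has_vector_derivative D) F \<Longrightarrow> ((\<lambda>x. Im (f x)) has_vector_derivative Im D) F"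
  using has_field_derivative_Im has_real_derivative_iff_has_vector_derivative by blast

lemma frame_s_eq:
  assumes d1: "\<And>\<theta>. cz differentiable (at \<theta>)" and c1: "continuous_on UNIV (\<lambda>\<theta>. vector_derivative cz (at \<theta>))"
  shows "frame_s (lift t0 cz cw) s u = (0, vector_derivative cz (at s))"
proof -
  define D where "D = vector_derivative cz (at s)"
  have hd: "(cz has_vector_derivative D) (at s)" unfolding D_def using d1 vector_derivative_works by blast
  have ci: "continuous_on UNIV (\<lambda>\<sigma>. Im (cz \<sigma>) * Re (vector_derivative cz (at \<sigma>)))"
  proof -
    have "continuous_on UNIV cz" using d1
      by (simp add: continuous_at_imp_continuous_on differentiable_imp_continuous_within)
    then show ?thesis using c1 by (intro continuous_intros) auto
  qed
  have ht: "((\<lambda>x. t0 + sint (\<lambda>\<sigma>. Im (cz \<sigma>) * Re (vector_derivative cz (at \<sigma>))) 0 x + sint (\<lambda>\<tau>. Im (cw \<tau>) * Re (vector_derivative cw (at \<tau>))) 0 u) has_vector_derivative Im (cz s) * Re (vector_derivative cz (at s))) (at s)"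
    using has_vector_derivative_add[OF has_vector_derivative_add[OF has_vector_derivative_const sint_deriv[OF ci]] has_vector_derivative_const] by simp
  have "((\<lambda>\<sigma>. lift t0 cz cw (\<sigma>, u)) has_vector_derivative
        (0, Im D, 0, Re D, Im (cz s) * Re (vector_derivative cz (at s)))) (at s)"
    unfolding lift_def
    by (simp, intro has_vector_derivative_Pair has_vector_derivative_const Re_vd Im_vd hd
          ht)
  then have "vector_derivative (\<lambda>\<sigma>. lift t0 cz cw (\<sigma>, u)) (at s) = (0, Im D, 0, Re D, Im (cz s) * Re (vector_derivative cz (at s)))"
    by (rule vector_derivative_at)
  then show ?thesis unfolding frame_s_def lag_cx_def D_def by (simp add: complex_eq_iff)
qed

lemma frame_u_eq:
  assumes d1: "\<And>\<theta>. cw differentiable (at \<theta>)" and c1: "continuous_on UNIV (\<lambda>\<theta>. vector_derivative cw (at \<theta>))"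
  shows "frame_u (lift t0 cz cw) s u = (vector_derivative cw (at u), 0)"
proof -
  define D where "D = vector_derivative cw (at u)"
  have hd: "(cw has_vector_derivative D) (at u)" unfolding D_def using d1 vector_derivative_works by blast
  have ci: "continuous_on UNIV (\<lambda>\<sigma>. Im (cw \<sigma>) * Re (vector_derivative cw (at \<sigma>)))"
  proof -
    have "continuous_on UNIV cw" using d1
      by (simp add: continuous_at_imp_continuous_on differentiable_imp_continuous_within)
    then show ?thesis using c1 by (intro continuous_intros) auto
  qed
  have ht: "((\<lambda>x. t0 + sint (\<lambda>\<sigma>. Im (cz \<sigma>) * Re (vector_derivative cz (at \<sigma>))) 0 s + sint (\<lambda>\<tau>. Im (cw \<tau>) * Re (vector_derivative cw (at \<tau>))) 0 x) has_vector_derivative Im (cw u) * Re (vector_derivative cw (at u))) (at u)"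
    using has_vector_derivative_add[OF has_vector_derivative_const sint_deriv[OF ci]] by simp
  have "((\<lambda>\<tau>. lift t0 cz cw (s, \<tau>)) has_vector_derivative
        (Re D, 0, Im D, 0, Im (cw u) * Re (vector_derivative cw (at u)))) (at u)"
    unfolding lift_def
    by (simp, intro has_vector_derivative_Pair has_vector_derivative_const Re_vd Im_vd hd
          ht)
  then have "vector_derivative (\<lambda>\<tau>. lift t0 cz cw (s, \<tau>)) (at u) = (Re D, 0, Im D, 0, Im (cw u) * Re (vector_derivative cw (at u)))"
    by (rule vector_derivative_at)
  then show ?thesis unfolding frame_u_def lag_cx_def D_def by (simp add: complex_eq_iff)
qed

lemma det_unitary_eq:
  assumes "a \<noteq> 0" "b \<noteq> 0"
  shows "det_unitary (0, a) (b, 0) = - (b / of_real (cmod b)) * (a / of_real (cmod a))"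
proof -
  have "Re (cnj a * a) = (cmod a)^2" by (metis complex_norm_square mult.commute Re_complex_of_real)
  moreover have "Re (cnj b * b) = (cmod b)^2" by (metis complex_norm_square mult.commute Re_complex_of_real)
  ultimately show ?thesis
    using assms unfolding det_unitary_def Let_def cinner_def cscale_def by (simp add: field_simps)
qed



lemma smoothing_basic:
  assumes "smoothing ps c"
  shows "(\<forall>\<theta>. c differentiable (at \<theta>)) \<and> continuous_on UNIV (\<lambda>\<theta>. vector_derivative c (at \<theta>)) \<and>
         (\<forall>\<theta>. vector_derivative c (at \<theta>) \<noteq> 0)"
  using assms unfolding smoothing_def Let_def
  apply (elim conjE)
  apply (intro conjI)
    apply assumption+
  done

theorem theorem1:
  fixes n :: nat and ms :: "mk list" and czx cwy :: "real \<Rightarrow> complex" and t0 :: real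
  assumes "lagrangian_hypercube n ms"
    and "smoothing (map ctr (gzx ms)) czx"
    and "smoothing (map ctr (gwy ms)) cwy"
    and "lagrangian_curve (\<lambda>\<theta>. czx (2 * pi * \<theta>))"
    and "lagrangian_curve (\<lambda>\<theta>. cwy (2 * pi * \<theta>))"
    and "inj_on (lift t0 czx cwy) ({0..<2 * pi} \<times> {0..<2 * pi})"
  shows "rot_class (lift t0 czx cwy) =
           (complex_of_real (wnum (gzx ms)), complex_of_real (wnum (gwy ms)))"
proof -
  have gz: "grid_diagram n (gzx ms)" and gw: "grid_diagram n (gwy ms)"
    using assms(1) by (auto simp: lagrangian_hypercube_def lagrangian_grid_def)
  note bz = smoothing_basic[OF assms(2)] and bw = smoothing_basic[OF assms(3)]
  have dz: "\<And>\<theta>. czx differentiable (at \<theta>)" and cz: "continuous_on UNIV (\<lambda>\<theta>. vector_derivative czx (at \<theta>))"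
    and nz: "\<And>\<theta>. vector_derivative czx (at \<theta>) \<noteq> 0" using bz by blast+
  have dw: "\<And>\<theta>. cwy differentiable (at \<theta>)" and cw: "continuous_on UNIV (\<lambda>\<theta>. vector_derivative cwy (at \<theta>))"
    and nw: "\<And>\<theta>. vector_derivative cwy (at \<theta>) \<noteq> 0" using bw by blast+
  define f where "f = lift t0 czx cwy"
  define a where "a \<theta> = vector_derivative czx (at \<theta>)" for \<theta>
  define b where "b \<theta> = vector_derivative cwy (at \<theta>)" for \<theta>
  have fs: "frame_s f s u = (0, a s)" for s u unfolding f_def a_def by (rule frame_s_eq[OF dz cz])
  have fu: "frame_u f s u = (b u, 0)" for s u unfolding f_def b_def by (rule frame_u_eq[OF dw cw])
  have anz: "a x \<noteq> 0" and bnz: "b x \<noteq> 0" for x using nz nw by (auto simp: a_def b_def)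
  define K1 where "K1 = - (b 0 / of_real (cmod (b 0)))"
  define K2 where "K2 = - (a 0 / of_real (cmod (a 0)))"
  have K1: "K1 \<noteq> 0" using bnz by (simp add: K1_def)
  have K2: "K2 \<noteq> 0" using anz by (simp add: K2_def)
  have e1: "winding_number (\<lambda>\<theta>. det_unitary (frame_s f (2 * pi * \<theta>) 0) (frame_u f (2 * pi * \<theta>) 0)) 0
      = W (\<lambda>\<theta>. K1 * (a \<theta> / of_real (cmod (a \<theta>)))) 0 (2 * pi)"
    unfolding W_def fs fu
    by (rule arg_cong[where f="\<lambda>g. winding_number g 0"], rule ext)
       (simp add: det_unitary_eq anz bnz K1_def mult.commute)
  have e2: "winding_number (\<lambda>\<theta>. det_unitary (frame_s f 0 (2 * pi * \<theta>)) (frame_u f 0 (2 * pi * \<theta>))) 0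
      = W (\<lambda>\<theta>. K2 * (b \<theta> / of_real (cmod (b \<theta>)))) 0 (2 * pi)"
    unfolding W_def fs fu
    by (rule arg_cong[where f="\<lambda>g. winding_number g 0"], rule ext)
       (simp add: det_unitary_eq anz bnz K2_def mult.commute)
  show ?thesis
    unfolding rot_class_def f_def[symmetric] e1 e2
    using main_wind[OF gz assms(2) K1] main_wind[OF gw assms(3) K2] unfolding a_def b_def by simp
qed


end
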